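(* Let $G$ be an $n$-vertex graph with maximum degree $\Delta\le 2^{\sqrt{\log n}}$. Run the following Phase I for $\kappa$ stages starting from $I_0=\emptyset$: in stage $i$, with $A_i = V\setminus\hat\Gamma(I_i)$ the active vertices, each $v\in A_i$ independently selects itself with probability $\frac{1}{\Delta+1}$, and $I_{i+1}=I_i\cup\{v\in A_i : v$ is the only vertex of its closed neighborhood in $G(A_i)$ that selected itself$\}$. Let $U=\{v\in A_\kappa : \deg_{G(A_\kappa)}(v)\ge \Delta/2\}$. There is a constant $c_6$ such that: (i) if $\kappa = c_6\sqrt{\log n}$, then with high probability every connected component of $G(U)$ has weak diameter less than $5\sqrt{\log n}$; (ii) if $\kappa = c_6\log\Delta$, then with high probability every connected component of $G(U)$ has fewer than $\Delta^4\log n$ vertices.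
   Context: $\hat\Gamma(X)$ is $X$ together with all neighbors of $X$. $G(U)$ is the subgraph induced by $U$. The weak diameter of $G(U)$ (or of a component with vertex set $C$) is $\max\{\operatorname{dist}_G(u,v): u,v\in C\}$, distances measured in the whole graph $G$. Logarithms are base 2. "With high probability" means with probability at least $1-1/n^{c}$ for an arbitrarily large fixed constant $c$ (with $c_6$ depending on $c$). *)

theory Defs
  imports "HOL-Probability.Probability"
begin

definition simple_graph :: "nat set \<Rightarrow> (nat \<Rightarrow> nat \<Rightarrow> bool) \<Rightarrow> bool" where
  "simple_graph V E \<longleftrightarrow> finite V \<and> (\<forall>u v. E u v \<longrightarrow> u \<in> V \<and> v \<in> V \<and> u \<noteq> v \<and> E v u)"

definition degree :: "nat set \<Rightarrow> (nat \<Rightarrow> nat \<Rightarrow> bool) \<Rightarrow> nat \<Rightarrow> nat" where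
  "degree V E v = card {u\<in>V. E v u}"

definition max_degree :: "nat set \<Rightarrow> (nat \<Rightarrow> nat \<Rightarrow> bool) \<Rightarrow> nat" where
  "max_degree V E = Max (degree V E ` V)"

definition closed_nbhd :: "nat set \<Rightarrow> (nat \<Rightarrow> nat \<Rightarrow> bool) \<Rightarrow> nat set \<Rightarrow> nat set" where
  "closed_nbhd V E X = X \<union> {v\<in>V. \<exists>u\<in>X. E u v}"

definition active :: "nat set \<Rightarrow> (nat \<Rightarrow> nat \<Rightarrow> bool) \<Rightarrow> nat set \<Rightarrow> nat set" where
  "active V E I = V - closed_nbhd V E I"

(* Phase I: sigma (i,v) = True iff vertex v selects itself in stage i.
   phaseI V E sigma i is the set I_i. *)
fun phaseI :: "nat set \<Rightarrow> (nat \<Rightarrow> nat \<Rightarrow> bool) \<Rightarrow> (nat \<times> nat \<Rightarrow> bool) \<Rightarrow> nat \<Rightarrow> nat set" where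
  "phaseI V E \<sigma> 0 = {}"
| "phaseI V E \<sigma> (Suc i) =
     (let I = phaseI V E \<sigma> i; A = active V E I
      in I \<union> {v\<in>A. \<sigma> (i, v) \<and> (\<forall>u\<in>A. E v u \<longrightarrow> \<not> \<sigma> (i, u))})"

definition U_set :: "nat set \<Rightarrow> (nat \<Rightarrow> nat \<Rightarrow> bool) \<Rightarrow> (nat \<times> nat \<Rightarrow> bool) \<Rightarrow> nat \<Rightarrow> nat set" where
  "U_set V E \<sigma> \<kappa> =
     (let A = active V E (phaseI V E \<sigma> \<kappa>)
      in {v\<in>A. real (card {u\<in>A. E v u}) \<ge> real (max_degree V E) / 2})"

definition coins :: "nat set \<Rightarrow> nat \<Rightarrow> real \<Rightarrow> (nat \<times> nat \<Rightarrow> bool) pmf" where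
  "coins V \<kappa> p = Pi_pmf ({..<\<kappa>} \<times> V) False (\<lambda>_. bernoulli_pmf p)"

definition components :: "(nat \<Rightarrow> nat \<Rightarrow> bool) \<Rightarrow> nat set \<Rightarrow> nat set set" where
  "components E U = {{w. (\<lambda>x y. E x y \<and> x \<in> U \<and> y \<in> U)\<^sup>*\<^sup>* u w} | u. u \<in> U}"

definition gdist :: "(nat \<Rightarrow> nat \<Rightarrow> bool) \<Rightarrow> nat \<Rightarrow> nat \<Rightarrow> nat" where
  "gdist E u v = (LEAST k. (E ^^ k) u v)"

definition weak_diam :: "(nat \<Rightarrow> nat \<Rightarrow> bool) \<Rightarrow> nat set \<Rightarrow> nat" where
  "weak_diam E C = Max {gdist E u v | u v. u \<in> C \<and> v \<in> C}"

end

theory Submission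
  imports Defs
begin

definition reach :: "(nat \<Rightarrow> nat \<Rightarrow> bool) \<Rightarrow> nat \<Rightarrow> nat \<Rightarrow> nat \<Rightarrow> bool" where
  "reach E k x y \<longleftrightarrow> (\<exists>j\<le>k. (E ^^ j) x y)"

lemma reach_refl: "reach E k x x"
  unfolding reach_def by (auto intro!: exI[of _ 0])

lemma reach_E: "E x y \<Longrightarrow> k \<ge> 1 \<Longrightarrow> reach E k x y"
  unfolding reach_def by (auto intro!: exI[of _ 1])

lemma reach_trans: "reach E a x y \<Longrightarrow> reach E b y z \<Longrightarrow> reach E (a+b) x z"
  unfolding reach_def by (auto intro: relpowp_trans add_mono)

lemma reach_mono: "reach E a x y \<Longrightarrow> a \<le> b \<Longrightarrow> reach E b x y"
  unfolding reach_def using le_trans by blast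

lemma relpowp_sym: assumes "\<And>u v. E u v \<Longrightarrow> E v u" shows "(E ^^ j) x y \<Longrightarrow> (E ^^ j) y x"
proof (induction j arbitrary: y)
  case 0 thus ?case by auto
next
  case (Suc j)
  then obtain z where "(E ^^ j) x z" "E z y" by (auto elim: relpowp_Suc_E)
  have "(E ^^ j) z x" using Suc.IH[OF \<open>(E ^^ j) x z\<close>] .
  thus ?case using assms \<open>E z y\<close> by (meson relpowp_Suc_I2)
qed

lemma sg_sym: "simple_graph V E \<Longrightarrow> E u v \<Longrightarrow> E v u"
  unfolding simple_graph_def by auto

lemma sg_V: "simple_graph V E \<Longrightarrow> E u v \<Longrightarrow> u \<in> V \<and> v \<in> V"
  unfolding simple_graph_def by auto

lemma reach_sym: "simple_graph V E \<Longrightarrow> reach E k x y \<Longrightarrow> reach E k y x"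
  unfolding reach_def using relpowp_sym[of E] sg_sym by metis

lemma relpowp_V: assumes "simple_graph V E" "x \<in> V" shows "(E ^^ j) x y \<Longrightarrow> y \<in> V"
proof (induction j arbitrary: y)
  case 0 thus ?case using assms by auto
next
  case (Suc j)
  then obtain z where "(E ^^ j) x z" "E z y" by (auto elim: relpowp_Suc_E)
  thus ?case using sg_V[OF assms(1)] by auto
qed

lemma reach_V: "simple_graph V E \<Longrightarrow> x \<in> V \<Longrightarrow> reach E k x y \<Longrightarrow> y \<in> V"
  unfolding reach_def using relpowp_V by metis

lemma degree_le: "simple_graph V E \<Longrightarrow> v \<in> V \<Longrightarrow> degree V E v \<le> max_degree V E"
  unfolding max_degree_def simple_graph_def by auto

lemma nbr_card_le: assumes "simple_graph V E" "v \<in> V" "A \<subseteq> V"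
  shows "card {u\<in>A. E v u} \<le> max_degree V E"
proof -
  have "card {u\<in>A. E v u} \<le> card {u\<in>V. E v u}"
    using assms by (intro card_mono) (auto simp: simple_graph_def)
  thus ?thesis using degree_le[OF assms(1,2)] unfolding degree_def by simp
qed

lemma ball_card: assumes G: "simple_graph V E" and x: "x \<in> V"
  shows "finite {y. reach E k x y} \<and> card {y. reach E k x y} \<le> (max_degree V E + 1) ^ k"
proof (induction k)
  case 0
  have "{y. reach E 0 x y} = {x}" unfolding reach_def by auto
  thus ?case by simp
next
  case (Suc k)
  let ?B = "{y. reach E k x y}"
  have sub: "{y. reach E (Suc k) x y} \<subseteq> (\<Union>z\<in>?B. insert z {u\<in>V. E z u})"
  proof
    fix y assume "y \<in> {y. reach E (Suc k) x y}"
    then obtain j where j: "j \<le> Suc k" "(E ^^ j) x y" unfolding reach_def by auto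
    show "y \<in> (\<Union>z\<in>?B. insert z {u\<in>V. E z u})"
    proof (cases j)
      case 0 thus ?thesis using j reach_refl[of E k x] by auto
    next
      case (Suc i)
      then obtain z where "(E ^^ i) x z" "E z y" using j by (auto elim: relpowp_Suc_E)
      moreover have "reach E k x z" using \<open>(E ^^ i) x z\<close> Suc j unfolding reach_def by auto
      ultimately show ?thesis using sg_V[OF G] by blast
    qed
  qed
  have BV: "?B \<subseteq> V" using reach_V[OF G x] by auto
  have fin: "finite (\<Union>z\<in>?B. insert z {u\<in>V. E z u})" using Suc G by (auto simp: simple_graph_def)
  have "card {y. reach E (Suc k) x y} \<le> card (\<Union>z\<in>?B. insert z {u\<in>V. E z u})"
    by (rule card_mono[OF fin sub])
  also have "\<dots> \<le> (\<Sum>z\<in>?B. card (insert z {u\<in>V. E z u}))" by (rule card_UN_le) (use Suc in auto)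
  also have "\<dots> \<le> (\<Sum>z\<in>?B. max_degree V E + 1)"
  proof (rule sum_mono)
    fix z assume "z \<in> ?B"
    hence "z \<in> V" using BV by auto
    have "card (insert z {u\<in>V. E z u}) \<le> card {u\<in>V. E z u} + 1" by (simp add: card_insert_le_m1 card_insert_if)
    thus "card (insert z {u\<in>V. E z u}) \<le> max_degree V E + 1"
      using nbr_card_le[OF G \<open>z\<in>V\<close>, of V] by simp
  qed
  also have "\<dots> = card ?B * (max_degree V E + 1)" by simp
  also have "\<dots> \<le> (max_degree V E + 1) ^ Suc k" using Suc by (metis mult.commute mult_le_mono2 power_Suc)
  finally show ?case using finite_subset[OF sub fin] by simp
qed

lemma pair_prob_le:
  fixes A :: "'a pmf" and B :: "'b pmf"
  assumes "\<And>a. measure_pmf.prob B {b. (a,b) \<in> X} \<le> (if a \<in> P then r else 0)" "r \<ge> 0"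
  shows "measure_pmf.prob (pair_pmf A B) X \<le> r * measure_pmf.prob A P"
proof -
  have "emeasure (measure_pmf (pair_pmf A B)) X = (\<integral>\<^sup>+x. indicator X x \<partial>pair_pmf A B)" by simp
  also have "\<dots> = (\<integral>\<^sup>+a. \<integral>\<^sup>+b. indicator X (a, b) \<partial>B \<partial>A)" by (rule nn_integral_pair_pmf')
  also have "\<dots> = (\<integral>\<^sup>+a. emeasure (measure_pmf B) {b. (a,b) \<in> X} \<partial>A)"
  proof (rule nn_integral_cong)
    fix a
    have "(\<lambda>b. indicator X (a, b) :: ennreal) = indicator {b. (a,b) \<in> X}" by (auto simp: indicator_def)
    thus "(\<integral>\<^sup>+b. indicator X (a, b) \<partial>B) = emeasure (measure_pmf B) {b. (a,b) \<in> X}" by simp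
  qed
  also have "\<dots> \<le> (\<integral>\<^sup>+a. ennreal r * indicator P a \<partial>A)"
  proof (rule nn_integral_mono)
    fix a
    have "emeasure (measure_pmf B) {b. (a,b) \<in> X} = ennreal (measure_pmf.prob B {b. (a,b) \<in> X})"
      by (simp add: measure_pmf.emeasure_eq_measure)
    also have "\<dots> \<le> ennreal (if a \<in> P then r else 0)" using assms(1)[of a] by (rule ennreal_leI)
    also have "\<dots> = ennreal r * indicator P a" by (auto simp: indicator_def)
    finally show "emeasure (measure_pmf B) {b. (a,b) \<in> X} \<le> ennreal r * indicator P a" .
  qed
  also have "\<dots> = ennreal r * emeasure (measure_pmf A) P" by (rule nn_integral_cmult_indicator) simp
  also have "\<dots> = ennreal (r * measure_pmf.prob A P)"
    using assms(2) by (simp add: measure_pmf.emeasure_eq_measure ennreal_mult)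
  finally show ?thesis
    by (simp add: measure_pmf.emeasure_eq_measure assms(2))
qed

definition rem :: "(nat \<Rightarrow> nat \<Rightarrow> bool) \<Rightarrow> nat set \<Rightarrow> (nat \<Rightarrow> bool) \<Rightarrow> nat \<Rightarrow> bool" where
  "rem E A \<tau> s \<longleftrightarrow> (\<exists>u\<in>A. (u = s \<or> E s u) \<and> \<tau> u \<and> (\<forall>w\<in>A. E u w \<longrightarrow> \<not> \<tau> w))"

lemma rem_cong: assumes "\<And>w. reach E 2 s w \<Longrightarrow> \<tau> w = \<tau>' w"
  shows "rem E A \<tau> s = rem E A \<tau>' s"
proof -
  have r1: "reach E 2 s u" if "u = s \<or> E s u" for u
    using that reach_refl reach_E by auto
  have r2: "reach E 2 s w" if "u = s \<or> E s u" "E u w" for u w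
  proof -
    have "reach E 1 s u" using that reach_refl reach_E by auto
    moreover have "reach E 1 u w" using that reach_E by auto
    ultimately show ?thesis using reach_trans[of E 1 s u 1 w] by (simp add: numeral_2_eq_2)
  qed
  show ?thesis unfolding rem_def using assms r1 r2 by metis
qed

lemma e_bound: assumes "(D::nat) \<ge> 1" shows "(1 + 1 / real D) ^ (2 * D) \<le> 8"
proof -
  have "(1 + 1 / real D) \<le> exp (1 / real D)" by (rule exp_ge_add_one_self)
  hence "(1 + 1 / real D) ^ D \<le> exp (1 / real D) ^ D" by (intro power_mono) auto
  also have "\<dots> = exp (real D * (1 / real D))" by (subst exp_of_nat_mult) simp
  also have "\<dots> = exp 1" using assms by simp
  finally have a: "(1 + 1 / real D) ^ D \<le> exp 1" .
  have "(1 + 1 / real D) ^ (2 * D) = ((1 + 1 / real D) ^ D)^2" by (simp add: power_mult mult.commute)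
  also have "\<dots> \<le> (exp 1)^2" using a by (intro power_mono) auto
  also have "\<dots> \<le> (272/100)^2" using e_less_272 by (intro power_mono) auto
  also have "\<dots> \<le> 8" by (simp add: power2_eq_square)
  finally show ?thesis .
qed

lemma single_bound:
  assumes G: "simple_graph V E" and D: "max_degree V E \<ge> 1" and fB: "finite B"
    and inj: "inj_on h V" and AV: "A \<subseteq> V" and sA: "s \<in> A"
    and hB: "h ` {w\<in>V. reach E 2 s w} \<subseteq> B"
    and deg: "real (card {u\<in>A. E s u}) \<ge> real (max_degree V E) / 2"
    and p: "p = 1 / (real (max_degree V E) + 1)"
  shows "measure_pmf.prob (Pi_pmf B False (\<lambda>_. bernoulli_pmf p)) {g. \<not> rem E A (g \<circ> h) s} \<le> 31/32"
proof -
  let ?D = "max_degree V E"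
  let ?M = "Pi_pmf B False (\<lambda>_. bernoulli_pmf p)"
  define N where "N = {u\<in>A. E s u}"
  define W where "W u = ({w\<in>A. E s w} \<union> {w\<in>A. E u w}) - {u}" for u
  define F where "F u = {g. g (h u) \<and> (\<forall>w\<in>W u. \<not> g (h w))}" for u
  have p01: "0 \<le> p" "p \<le> 1" using p by auto
  have sV: "s \<in> V" using sA AV by auto
  have finN: "finite N" using AV G unfolding N_def simple_graph_def by (auto intro: finite_subset)
  have Fsub: "(\<Union>u\<in>N. F u) \<subseteq> {g. rem E A (g \<circ> h) s}"
  proof
    fix g assume "g \<in> (\<Union>u\<in>N. F u)"
    then obtain u where u: "u \<in> N" "g \<in> F u" by auto
    have "\<forall>w\<in>A. E u w \<longrightarrow> \<not> g (h w)"
    proof (intro ballI impI)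
      fix w assume "w \<in> A" "E u w"
      hence "w \<noteq> u" using G unfolding simple_graph_def by auto
      hence "w \<in> W u" using \<open>w\<in>A\<close> \<open>E u w\<close> unfolding W_def by auto
      thus "\<not> g (h w)" using u unfolding F_def by auto
    qed
    thus "g \<in> {g. rem E A (g \<circ> h) s}" using u unfolding rem_def N_def F_def by auto
  qed
  have disj: "disjoint_family_on F N"
    unfolding disjoint_family_on_def
  proof (intro ballI impI)
    fix u v assume uv: "u \<in> N" "v \<in> N" "u \<noteq> v"
    have "v \<in> W u" using uv unfolding W_def N_def by auto
    thus "F u \<inter> F v = {}" unfolding F_def by auto
  qed
  have probF: "measure_pmf.prob ?M (F u) \<ge> p * (1 - p) ^ (2 * ?D)" if uN: "u \<in> N" for u
  proof -
    have uV: "u \<in> V" using uN AV unfolding N_def by auto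
    have WV: "W u \<subseteq> V" using AV unfolding W_def by auto
    have hu: "h u \<in> B" using hB uV uN reach_E[of E s u 2] unfolding N_def by auto
    have hW: "h ` W u \<subseteq> B"
    proof
      fix x assume "x \<in> h ` W u"
      then obtain w where w: "w \<in> W u" "x = h w" by auto
      have "reach E 2 s w"
      proof (cases "E s w")
        case True thus ?thesis using reach_E by auto
      next
        case False
        hence "E u w" using w unfolding W_def by auto
        have "reach E 1 s u" "reach E 1 u w" using uN \<open>E u w\<close> reach_E unfolding N_def by auto
        thus ?thesis using reach_trans[of E 1 s u 1 w] by (simp add: numeral_2_eq_2)
      qed
      thus "x \<in> B" using hB w WV by auto
    qed
    have nW: "h u \<notin> h ` W u" using inj uV WV unfolding W_def inj_on_def by auto
    define X where "X x = (if x = h u then {True} else if x \<in> h ` W u then {False} else UNIV)" for x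
    have FPi: "F u = Pi B X"
    proof (intro set_eqI iffI)
      fix g assume "g \<in> F u"
      thus "g \<in> Pi B X" unfolding F_def X_def by auto
    next
      fix g assume g: "g \<in> Pi B X"
      have "g (h u) \<in> X (h u)" using g hu by (rule Pi_mem)
      hence "g (h u)" unfolding X_def by simp
      moreover have "\<not> g (h w)" if "w \<in> W u" for w
      proof -
        have "h w \<in> B" "h w \<noteq> h u" using that hW nW by (auto simp del: image_iff) (metis image_eqI)
        thus ?thesis using g that unfolding X_def by (auto simp: Pi_def)
      qed
      ultimately show "g \<in> F u" unfolding F_def by auto
    qed
    have fW: "finite (W u)" using WV G unfolding simple_graph_def by (auto intro: finite_subset)
    have "measure_pmf.prob ?M (F u) = (\<Prod>x\<in>B. measure_pmf.prob (bernoulli_pmf p) (X x))"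
      unfolding FPi by (rule measure_Pi_pmf_Pi[OF fB])
    also have "\<dots> = (\<Prod>x\<in>insert (h u) (h ` W u). measure_pmf.prob (bernoulli_pmf p) (X x))"
      by (rule prod.mono_neutral_right) (use fB hu hW in \<open>auto simp: X_def\<close>)
    also have "\<dots> = p * (\<Prod>x\<in>h ` W u. measure_pmf.prob (bernoulli_pmf p) (X x))"
      using fW nW p01 by (simp add: X_def measure_pmf_single)
    also have "(\<Prod>x\<in>h ` W u. measure_pmf.prob (bernoulli_pmf p) (X x)) = (\<Prod>x\<in>h ` W u. 1 - p)"
    proof (intro prod.cong refl)
      fix x assume "x \<in> h ` W u"
      hence "x \<noteq> h u" using nW by metis
      thus "measure_pmf.prob (bernoulli_pmf p) (X x) = 1 - p"
        using \<open>x \<in> h ` W u\<close> p01 by (simp add: X_def measure_pmf_single)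
    qed
    also have "\<dots> = (1 - p) ^ card (W u)"
      using inj WV by (simp add: card_image inj_on_subset)
    finally have eq: "measure_pmf.prob ?M (F u) = p * (1 - p) ^ card (W u)" .
    have "card (W u) \<le> card ({w\<in>A. E s w} \<union> {w\<in>A. E u w})"
      unfolding W_def using fW WV G by (intro card_mono) (auto simp: simple_graph_def intro: finite_subset)
    also have "\<dots> \<le> card {w\<in>A. E s w} + card {w\<in>A. E u w}" by (rule card_Un_le)
    also have "\<dots> \<le> 2 * ?D" using nbr_card_le[OF G sV AV] nbr_card_le[OF G uV AV] by simp
    finally have "card (W u) \<le> 2 * ?D" .
    hence "(1 - p) ^ (2 * ?D) \<le> (1 - p) ^ card (W u)" using p01 by (intro power_decreasing) auto
    thus ?thesis using eq p01 by (simp add: mult_left_mono)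
  qed
  have "measure_pmf.prob ?M (\<Union>u\<in>N. F u) = (\<Sum>u\<in>N. measure_pmf.prob ?M (F u))"
    by (rule measure_pmf.finite_measure_finite_Union[OF finN _ disj]) simp
  also have "\<dots> \<ge> (\<Sum>u\<in>N. p * (1 - p) ^ (2 * ?D))" using probF by (intro sum_mono) auto
  finally have "measure_pmf.prob ?M (\<Union>u\<in>N. F u) \<ge> real (card N) * (p * (1 - p) ^ (2 * ?D))" by simp
  moreover have "real (card N) * (p * (1 - p) ^ (2 * ?D)) \<ge> 1/32"
  proof -
    have Dr: "real ?D \<ge> 1" using D by simp
    have a: "real (card N) * p \<ge> 1/4"
      using deg Dr unfolding N_def p by (simp add: field_simps)
    have "1 - p = 1 / (1 + 1 / real ?D)" unfolding p using Dr by (simp add: field_simps)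
    hence "(1 - p) ^ (2 * ?D) = 1 / (1 + 1 / real ?D) ^ (2 * ?D)" by (simp add: power_divide)
    moreover have "(1 + 1 / real ?D) ^ (2 * ?D) \<le> 8" by (rule e_bound[OF D])
    moreover have "(1 + 1 / real ?D) ^ (2 * ?D) > 0" by (intro zero_less_power) (simp add: add_pos_nonneg)
    ultimately have b: "(1 - p) ^ (2 * ?D) \<ge> 1/8" by (simp add: field_simps)
    have "(1/4) * (1/8) \<le> (real (card N) * p) * (1 - p) ^ (2 * ?D)"
      using a b by (intro mult_mono) auto
    thus ?thesis by (simp add: mult.assoc)
  qed
  ultimately have "measure_pmf.prob ?M {g. rem E A (g \<circ> h) s} \<ge> 1/32"
    using measure_pmf.finite_measure_mono[OF Fsub] by (smt (verit) sets_measure_pmf UNIV_I)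
  moreover have "{g. \<not> rem E A (g \<circ> h) s} = UNIV - {g. rem E A (g \<circ> h) s}" by auto
  moreover have "measure_pmf.prob ?M (UNIV - {g. rem E A (g \<circ> h) s}) = 1 - measure_pmf.prob ?M {g. rem E A (g \<circ> h) s}"
    using measure_pmf.prob_compl[of "{g. rem E A (g \<circ> h) s}" ?M] by simp
  ultimately show ?thesis by simp
qed

lemma surv:
  assumes G: "simple_graph V E" and D: "max_degree V E \<ge> 1"
    and inj: "inj_on h V" and AV: "A \<subseteq> V"
    and p: "p = 1 / (real (max_degree V E) + 1)"
  shows "finite S \<Longrightarrow> S \<subseteq> A \<Longrightarrow> (\<forall>s\<in>S. \<forall>t\<in>S. s \<noteq> t \<longrightarrow> \<not> reach E 4 s t) \<Longrightarrow>
    (\<forall>s\<in>S. real (card {u\<in>A. E s u}) \<ge> real (max_degree V E) / 2) \<Longrightarrow> finite I \<Longrightarrow>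
    (\<forall>s\<in>S. h ` {w\<in>V. reach E 2 s w} \<subseteq> I) \<Longrightarrow>
    measure_pmf.prob (Pi_pmf I False (\<lambda>_. bernoulli_pmf p)) {g. \<forall>s\<in>S. \<not> rem E A (g \<circ> h) s}
      \<le> (31/32) ^ card S"
proof (induction S arbitrary: I rule: finite_induct)
  case empty thus ?case by simp
next
  case (insert s S)
  define B where "B = h ` {w\<in>V. reach E 2 s w}"
  define I' where "I' = I - B"
  have BI: "B \<subseteq> I" using insert.prems unfolding B_def by auto
  have fB: "finite B" using BI insert.prems(4) finite_subset by blast
  have fI': "finite I'" using insert.prems(4) unfolding I'_def by auto
  have sA: "s \<in> A" using insert.prems by auto
  have sV: "s \<in> V" using sA AV by auto
  have split: "I = B \<union> I'" "B \<inter> I' = {}" using BI unfolding I'_def by auto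
  let ?bern = "\<lambda>_. bernoulli_pmf p"
  let ?mg = "\<lambda>(f,g) x. if x \<in> B then f x else (g x :: bool)"
  have PI: "Pi_pmf I False ?bern = map_pmf ?mg (pair_pmf (Pi_pmf B False ?bern) (Pi_pmf I' False ?bern))"
    unfolding split(1) by (rule Pi_pmf_union[OF fB fI' split(2)])
  define R1 where "R1 = {f. \<not> rem E A (f \<circ> h) s}"
  define R2 where "R2 = {g. \<forall>t\<in>S. \<not> rem E A (g \<circ> h) t}"
  have sub: "?mg -` {g. \<forall>t\<in>insert s S. \<not> rem E A (g \<circ> h) t} \<subseteq> R1 \<times> R2"
  proof
    fix fg assume a: "fg \<in> ?mg -` {g. \<forall>t\<in>insert s S. \<not> rem E A (g \<circ> h) t}"
    obtain f g where fg: "fg = (f,g)" by (cases fg)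
    let ?m = "?mg (f,g)"
    have "rem E A (?m \<circ> h) s = rem E A (f \<circ> h) s"
    proof (rule rem_cong)
      fix w assume "reach E 2 s w"
      hence "h w \<in> B" unfolding B_def using reach_V[OF G sV] by auto
      thus "(?m \<circ> h) w = (f \<circ> h) w" by simp
    qed
    moreover have "rem E A (?m \<circ> h) t = rem E A (g \<circ> h) t" if tS: "t \<in> S" for t
    proof (rule rem_cong)
      fix w assume tw: "reach E 2 t w"
      have "h w \<notin> B"
      proof
        assume "h w \<in> B"
        then obtain w' where w': "w' \<in> V" "reach E 2 s w'" "h w = h w'" unfolding B_def by auto
        have tV: "t \<in> V" using tS insert.prems AV by auto
        have wV: "w \<in> V" using reach_V[OF G tV tw] .
        have "w = w'" using inj w' wV unfolding inj_on_def by auto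
        hence "reach E 2 w t" using reach_sym[OF G tw] by simp
        hence "reach E (2+2) s t" using reach_trans[OF w'(2)] \<open>w = w'\<close> by blast
        hence "reach E 4 s t" by simp
        moreover have "s \<noteq> t" using tS insert.hyps by auto
        ultimately show False using insert.prems(2) tS by simp
      qed
      thus "(?m \<circ> h) w = (g \<circ> h) w" by simp
    qed
    ultimately show "fg \<in> R1 \<times> R2" using a fg unfolding R1_def R2_def by auto
  qed
  have IH: "measure_pmf.prob (Pi_pmf I' False ?bern) R2 \<le> (31/32) ^ card S"
    unfolding R2_def
  proof (rule insert.IH)
    show "S \<subseteq> A" "\<forall>s\<in>S. \<forall>t\<in>S. s \<noteq> t \<longrightarrow> \<not> reach E 4 s t"
      "\<forall>s\<in>S. real (max_degree V E) / 2 \<le> real (card {u \<in> A. E s u})" "finite I'"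
      using insert.prems fI' by auto
    show "\<forall>t\<in>S. h ` {w \<in> V. reach E 2 t w} \<subseteq> I'"
    proof (intro ballI subsetI)
      fix t x assume tS: "t \<in> S" and x: "x \<in> h ` {w \<in> V. reach E 2 t w}"
      then obtain w where w: "w \<in> V" "reach E 2 t w" "x = h w" by auto
      have "x \<in> I" using insert.prems(5) tS w by blast
      moreover have "x \<notin> B"
      proof
        assume "x \<in> B"
        then obtain w' where w': "w' \<in> V" "reach E 2 s w'" "h w = h w'" unfolding B_def using w by auto
        have "w = w'" using inj w' w unfolding inj_on_def by auto
        hence "reach E 2 w t" using reach_sym[OF G w(2)] by simp
        hence "reach E (2+2) s t" using reach_trans[OF w'(2)] \<open>w = w'\<close> by blast
        hence "reach E 4 s t" by simp
        moreover have "s \<noteq> t" using tS insert.hyps by auto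
        ultimately show False using insert.prems(2) tS by simp
      qed
      ultimately show "x \<in> I'" unfolding I'_def by auto
    qed
  qed
  have S1: "measure_pmf.prob (Pi_pmf B False ?bern) R1 \<le> 31/32"
    unfolding R1_def
    by (rule single_bound[OF G D fB inj AV sA _ _ p]) (use insert.prems in \<open>auto simp: B_def\<close>)
  have "measure_pmf.prob (Pi_pmf I False ?bern) {g. \<forall>t\<in>insert s S. \<not> rem E A (g \<circ> h) t}
      = measure_pmf.prob (pair_pmf (Pi_pmf B False ?bern) (Pi_pmf I' False ?bern))
          (?mg -` {g. \<forall>t\<in>insert s S. \<not> rem E A (g \<circ> h) t})"
    unfolding PI by simp
  also have "\<dots> \<le> measure_pmf.prob (pair_pmf (Pi_pmf B False ?bern) (Pi_pmf I' False ?bern)) (R1 \<times> R2)"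
    by (rule measure_pmf.finite_measure_mono[OF sub]) simp
  also have "\<dots> \<le> measure_pmf.prob (Pi_pmf I' False ?bern) R2 * measure_pmf.prob (Pi_pmf B False ?bern) R1"
    by (rule pair_prob_le) auto
  also have "\<dots> \<le> (31/32) ^ card S * (31/32)"
    using IH S1 by (intro mult_mono) auto
  also have "\<dots> = (31/32) ^ card (insert s S)" using insert.hyps by simp
  finally show ?case .
qed

definition good :: "nat set \<Rightarrow> (nat \<Rightarrow> nat \<Rightarrow> bool) \<Rightarrow> (nat \<times> nat \<Rightarrow> bool) \<Rightarrow> nat \<Rightarrow> nat set \<Rightarrow> bool" where
  "good V E \<sigma> k S \<longleftrightarrow> (\<forall>s\<in>S. s \<in> active V E (phaseI V E \<sigma> k) \<and>
      real (card {u\<in>active V E (phaseI V E \<sigma> k). E s u}) \<ge> real (max_degree V E) / 2)"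

lemma phaseI_cong: "(\<forall>i<k. \<forall>v\<in>V. \<sigma> (i,v) = \<sigma>' (i,v)) \<Longrightarrow> phaseI V E \<sigma> k = phaseI V E \<sigma>' k"
proof (induction k)
  case 0 thus ?case by simp
next
  case (Suc k)
  hence eq: "phaseI V E \<sigma> k = phaseI V E \<sigma>' k" by auto
  have AV: "active V E (phaseI V E \<sigma> k) \<subseteq> V" unfolding active_def by auto
  show ?case using Suc.prems AV by (simp add: Let_def eq) (blast)
qed

lemma phaseI_mono: "phaseI V E \<sigma> k \<subseteq> phaseI V E \<sigma> (Suc k)"
  by (simp add: Let_def)

lemma active_anti: "I \<subseteq> J \<Longrightarrow> active V E J \<subseteq> active V E I"
  unfolding active_def closed_nbhd_def by auto

lemma good_step:
  assumes G: "simple_graph V E" and g: "good V E \<sigma> (Suc k) S"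
  shows "good V E \<sigma> k S \<and> (\<forall>s\<in>S. \<not> rem E (active V E (phaseI V E \<sigma> k)) (\<lambda>v. \<sigma> (k,v)) s)"
proof
  let ?A = "active V E (phaseI V E \<sigma> k)"
  let ?A' = "active V E (phaseI V E \<sigma> (Suc k))"
  have sub: "?A' \<subseteq> ?A" by (rule active_anti[OF phaseI_mono])
  have fin: "finite ?A" using G unfolding simple_graph_def active_def by auto
  show "good V E \<sigma> k S"
    unfolding good_def
  proof
    fix s assume "s \<in> S"
    hence a: "s \<in> ?A'" "real (card {u\<in>?A'. E s u}) \<ge> real (max_degree V E) / 2"
      using g unfolding good_def by auto
    have "card {u\<in>?A'. E s u} \<le> card {u\<in>?A. E s u}" using sub fin by (intro card_mono) auto
    thus "s \<in> ?A \<and> real (card {u\<in>?A. E s u}) \<ge> real (max_degree V E) / 2" using a sub by auto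
  qed
  show "\<forall>s\<in>S. \<not> rem E ?A (\<lambda>v. \<sigma> (k,v)) s"
  proof (intro ballI notI)
    fix s assume sS: "s \<in> S" and r: "rem E ?A (\<lambda>v. \<sigma> (k,v)) s"
    have sA': "s \<in> ?A'" using g sS unfolding good_def by auto
    hence sV: "s \<in> V" unfolding active_def by auto
    obtain u where u: "u \<in> ?A" "u = s \<or> E s u" "\<sigma> (k,u)" "\<forall>w\<in>?A. E u w \<longrightarrow> \<not> \<sigma> (k,w)"
      using r unfolding rem_def by auto
    have "u \<in> phaseI V E \<sigma> (Suc k)" using u by (simp add: Let_def)
    hence "s \<in> closed_nbhd V E (phaseI V E \<sigma> (Suc k))"
      using u(2) sV sg_sym[OF G] unfolding closed_nbhd_def by blast
    thus False using sA' unfolding active_def by auto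
  qed
qed

lemma stage_bound:
  assumes G: "simple_graph V E" and D: "max_degree V E \<ge> 1"
    and p: "p = 1 / (real (max_degree V E) + 1)"
    and fS: "finite S" and SV: "S \<subseteq> V" and sep: "\<forall>s\<in>S. \<forall>t\<in>S. s \<noteq> t \<longrightarrow> \<not> reach E 4 s t"
  shows "measure_pmf.prob (coins V k p) {\<sigma>. good V E \<sigma> k S} \<le> (31/32) ^ (k * card S)"
proof (induction k)
  case 0 thus ?case by simp
next
  case (Suc k)
  let ?bern = "\<lambda>_::nat\<times>nat. bernoulli_pmf p"
  let ?I = "{..<k} \<times> V" and ?J = "{k} \<times> V"
  have fV: "finite V" using G unfolding simple_graph_def by auto
  have split: "{..<Suc k} \<times> V = ?I \<union> ?J" "?I \<inter> ?J = {}" by (auto simp: lessThan_Suc)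
  let ?mg = "\<lambda>(f,g) x. if x \<in> ?I then f x else (g x :: bool)"
  have PI: "coins V (Suc k) p = map_pmf ?mg (pair_pmf (coins V k p) (Pi_pmf ?J False ?bern))"
    unfolding coins_def split(1) by (rule Pi_pmf_union) (use fV split(2) in auto)
  define h :: "nat \<Rightarrow> nat \<times> nat" where "h v = (k, v)" for v
  have "measure_pmf.prob (coins V (Suc k) p) {\<sigma>. good V E \<sigma> (Suc k) S}
      = measure_pmf.prob (pair_pmf (coins V k p) (Pi_pmf ?J False ?bern)) (?mg -` {\<sigma>. good V E \<sigma> (Suc k) S})"
    unfolding PI by simp
  also have "\<dots> \<le> (31/32) ^ card S * measure_pmf.prob (coins V k p) {f. good V E f k S}"
  proof (rule pair_prob_le)
    fix f
    have cong: "phaseI V E (?mg (f,g)) k = phaseI V E f k" for g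
      by (rule phaseI_cong) auto
    let ?A = "active V E (phaseI V E f k)"
    have sub: "{g. (f,g) \<in> ?mg -` {\<sigma>. good V E \<sigma> (Suc k) S}} \<subseteq>
        {g. good V E f k S \<and> (\<forall>s\<in>S. \<not> rem E ?A (g \<circ> h) s)}"
    proof
      fix g assume "g \<in> {g. (f,g) \<in> ?mg -` {\<sigma>. good V E \<sigma> (Suc k) S}}"
      hence "good V E (?mg (f,g)) (Suc k) S" by simp
      from good_step[OF G this] have a: "good V E (?mg (f,g)) k S"
        "\<forall>s\<in>S. \<not> rem E (active V E (phaseI V E (?mg (f,g)) k)) (\<lambda>v. ?mg (f,g) (k,v)) s" by auto
      have "good V E f k S" using a(1) cong[of g] unfolding good_def by simp
      moreover have "(\<lambda>v. ?mg (f,g) (k,v)) = g \<circ> h" by (auto simp: h_def)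
      ultimately show "g \<in> {g. good V E f k S \<and> (\<forall>s\<in>S. \<not> rem E ?A (g \<circ> h) s)}"
        using a(2) cong[of g] by simp
    qed
    show "measure_pmf.prob (Pi_pmf ?J False ?bern) {g. (f,g) \<in> ?mg -` {\<sigma>. good V E \<sigma> (Suc k) S}}
        \<le> (if f \<in> {f. good V E f k S} then (31/32) ^ card S else 0)"
    proof (cases "good V E f k S")
      case False
      hence "{g. (f,g) \<in> ?mg -` {\<sigma>. good V E \<sigma> (Suc k) S}} = {}" using sub by auto
      thus ?thesis using False by simp
    next
      case True
      have "measure_pmf.prob (Pi_pmf ?J False ?bern) {g. (f,g) \<in> ?mg -` {\<sigma>. good V E \<sigma> (Suc k) S}}
          \<le> measure_pmf.prob (Pi_pmf ?J False ?bern) {g. \<forall>s\<in>S. \<not> rem E ?A (g \<circ> h) s}"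
        by (rule measure_pmf.finite_measure_mono) (use sub in auto)
      also have "\<dots> \<le> (31/32) ^ card S"
      proof (rule surv[OF G D _ _ p fS])
        show "inj_on h V" unfolding h_def inj_on_def by auto
        show "?A \<subseteq> V" unfolding active_def by auto
        show "S \<subseteq> ?A" "\<forall>s\<in>S. real (max_degree V E) / 2 \<le> real (card {u \<in> ?A. E s u})"
          using True unfolding good_def by auto
        show "\<forall>s\<in>S. \<forall>t\<in>S. s \<noteq> t \<longrightarrow> \<not> reach E 4 s t" by (rule sep)
        show "finite ?J" using fV by auto
        show "\<forall>s\<in>S. h ` {w \<in> V. reach E 2 s w} \<subseteq> ?J" unfolding h_def by auto
      qed
      finally show ?thesis using True by simp
    qed
  qed simp
  also have "\<dots> \<le> (31/32) ^ card S * (31/32) ^ (k * card S)"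
    using Suc.IH by (intro mult_left_mono) auto
  also have "\<dots> = (31/32) ^ (Suc k * card S)" by (simp add: power_add)
  finally show ?case .
qed

definition sep :: "(nat \<Rightarrow> nat \<Rightarrow> bool) \<Rightarrow> nat set \<Rightarrow> bool" where
  "sep E S \<longleftrightarrow> (\<forall>s\<in>S. \<forall>t\<in>S. s \<noteq> t \<longrightarrow> \<not> reach E 4 s t)"

definition walks :: "nat set \<Rightarrow> (nat \<Rightarrow> nat \<Rightarrow> bool) \<Rightarrow> nat \<Rightarrow> nat list set" where
  "walks V E L = {xs. length xs = Suc L \<and> set xs \<subseteq> V \<and> successively (reach E 9) xs}"

lemma walks_card:
  assumes G: "simple_graph V E"
  shows "finite (walks V E L) \<and> card (walks V E L) \<le> card V * (max_degree V E + 1) ^ (9 * L)"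
proof (induction L)
  case 0
  have fV: "finite V" using G unfolding simple_graph_def by auto
  have "walks V E 0 = (\<lambda>x. [x]) ` V"
  proof (intro set_eqI iffI)
    fix xs assume "xs \<in> walks V E 0"
    then obtain x where "xs = [x]" "x \<in> V" unfolding walks_def by (auto simp: length_Suc_conv)
    thus "xs \<in> (\<lambda>x. [x]) ` V" by auto
  qed (auto simp: walks_def)
  thus ?case using fV card_image_le[OF fV, of "\<lambda>x. [x]"] by simp
next
  case (Suc L)
  let ?W = "walks V E L"
  let ?D = "max_degree V E"
  have sub: "walks V E (Suc L) \<subseteq> (\<Union>ys\<in>?W. (\<lambda>x. x # ys) ` {x. reach E 9 (hd ys) x})"
  proof
    fix xs assume xs: "xs \<in> walks V E (Suc L)"
    then obtain x ys where xys: "xs = x # ys" unfolding walks_def by (cases xs) auto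
    have ys: "ys \<in> ?W" using xs xys unfolding walks_def by (auto simp: successively_Cons)
    have "ys \<noteq> []" using xs xys unfolding walks_def by auto
    hence "reach E 9 x (hd ys)" using xs xys unfolding walks_def by (auto simp: successively_Cons)
    hence "reach E 9 (hd ys) x" using reach_sym[OF G] by auto
    thus "xs \<in> (\<Union>ys\<in>?W. (\<lambda>x. x # ys) ` {x. reach E 9 (hd ys) x})" using ys xys by auto
  qed
  have hdV: "hd ys \<in> V" if "ys \<in> ?W" for ys
    using that unfolding walks_def by (cases ys) auto
  have fin: "finite (\<Union>ys\<in>?W. (\<lambda>x. x # ys) ` {x. reach E 9 (hd ys) x})"
    using Suc ball_card[OF G hdV] by auto
  have "card (walks V E (Suc L)) \<le> card (\<Union>ys\<in>?W. (\<lambda>x. x # ys) ` {x. reach E 9 (hd ys) x})"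
    by (rule card_mono[OF fin sub])
  also have "\<dots> \<le> (\<Sum>ys\<in>?W. card ((\<lambda>x. x # ys) ` {x. reach E 9 (hd ys) x}))"
    by (rule card_UN_le) (use Suc in auto)
  also have "\<dots> \<le> (\<Sum>ys\<in>?W. (?D + 1) ^ 9)"
  proof (rule sum_mono)
    fix ys assume "ys \<in> ?W"
    have "card ((\<lambda>x. x # ys) ` {x. reach E 9 (hd ys) x}) \<le> card {x. reach E 9 (hd ys) x}"
      by (rule card_image_le) (use ball_card[OF G hdV[OF \<open>ys\<in>?W\<close>]] in auto)
    thus "card ((\<lambda>x. x # ys) ` {x. reach E 9 (hd ys) x}) \<le> (?D + 1) ^ 9"
      using ball_card[OF G hdV[OF \<open>ys\<in>?W\<close>], of 9] by linarith
  qed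
  also have "\<dots> = card ?W * (?D + 1) ^ 9" by simp
  also have "\<dots> \<le> card V * (?D + 1) ^ (9 * L) * (?D + 1) ^ 9"
    using Suc by (intro mult_right_mono) auto
  also have "\<dots> = card V * (?D + 1) ^ (9 * Suc L)" by (simp add: power_add mult.assoc)
  finally show ?case using finite_subset[OF sub fin] by simp
qed

lemma leave: "R\<^sup>*\<^sup>* a b \<Longrightarrow> a \<in> W \<Longrightarrow> b \<notin> W \<Longrightarrow> \<exists>x y. R x y \<and> x \<in> W \<and> y \<notin> W"
proof (induction rule: rtranclp_induct)
  case base thus ?case by simp
next
  case (step y z) thus ?case by (cases "y \<in> W") auto
qed

lemma succ_insert: "successively P (ys @ a # zs) \<Longrightarrow> P a b \<Longrightarrow> P b a \<Longrightarrow> successively P (ys @ a # b # a # zs)"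
  by (induction ys) (auto simp: successively_Cons hd_append split: if_splits)

lemma grow:
  assumes G: "simple_graph V E" and fT: "finite T"
    and conn: "\<forall>x\<in>T. \<forall>y\<in>T. (\<lambda>a b. reach E 9 a b \<and> a \<in> T \<and> b \<in> T)\<^sup>*\<^sup>* x y"
  shows "1 \<le> k \<Longrightarrow> k \<le> card T \<Longrightarrow> \<exists>xs. length xs = 2 * k - 1 \<and> set xs \<subseteq> T \<and> card (set xs) = k \<and>
      successively (reach E 9) xs"
proof (induction k rule: nat_induct_at_least)
  case base
  then obtain t where "t \<in> T" using fT by (auto simp: card_gt_0_iff Suc_le_eq)
  thus ?case by (intro exI[of _ "[t]"]) auto
next
  case (Suc k)
  then obtain xs where xs: "length xs = 2 * k - 1" "set xs \<subseteq> T" "card (set xs) = k" "successively (reach E 9) xs"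
    by auto
  have "set xs \<noteq> T" using xs(3) Suc.prems by auto
  then obtain z where z: "z \<in> T" "z \<notin> set xs" using xs(2) by auto
  have "xs \<noteq> []" using xs(3) Suc.hyps by auto
  then obtain w where w: "w \<in> set xs" by (cases xs) auto
  have "(\<lambda>a b. reach E 9 a b \<and> a \<in> T \<and> b \<in> T)\<^sup>*\<^sup>* w z" using conn w xs(2) z by auto
  from leave[OF this w z(2)] obtain a b where ab: "reach E 9 a b" "a \<in> set xs" "b \<notin> set xs" "b \<in> T"
    by auto
  from split_list[OF ab(2)] obtain ys zs where yz: "xs = ys @ a # zs" by auto
  let ?xs = "ys @ a # b # a # zs"
  have "successively (reach E 9) ?xs"
    using succ_insert[of "reach E 9" ys a zs b] xs(4) yz ab(1) reach_sym[OF G ab(1)] by simp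
  moreover have "set ?xs = insert b (set xs)" using yz by auto
  moreover have "length ?xs = 2 * Suc k - 1" using xs(1) yz Suc.hyps by auto
  ultimately show ?case using xs ab by (intro exI[of _ ?xs]) auto
qed

lemma walk_dist:
  assumes G: "simple_graph V E"
  shows "successively (reach E 9) xs \<Longrightarrow> a \<in> set xs \<Longrightarrow> b \<in> set xs \<Longrightarrow> reach E (9 * (length xs - 1)) a b"
proof (induction xs arbitrary: a b)
  case Nil thus ?case by simp
next
  case (Cons x ys)
  show ?case
  proof (cases "ys = []")
    case True thus ?thesis using Cons.prems reach_refl by auto
  next
    case False
    have h: "reach E 9 x (hd ys)" "successively (reach E 9) ys" using Cons.prems False by (auto simp: successively_Cons)
    have hy: "hd ys \<in> set ys" using False by auto
    let ?l = "9 * (length ys - 1)"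
    have L: "9 * (length (x # ys) - 1) = 9 + ?l" using False by (cases ys) auto
    show ?thesis
    proof (cases "a = x")
      case ax: True
      show ?thesis
      proof (cases "b = x")
        case True thus ?thesis using ax reach_refl by auto
      next
        case False
        hence "b \<in> set ys" using Cons.prems by auto
        hence "reach E ?l (hd ys) b" using Cons.IH h hy by auto
        thus ?thesis using reach_trans[OF h(1)] ax L by auto
      qed
    next
      case anx: False
      hence aY: "a \<in> set ys" using Cons.prems by auto
      show ?thesis
      proof (cases "b = x")
        case True
        have "reach E ?l a (hd ys)" using Cons.IH h hy aY by auto
        moreover have "reach E 9 (hd ys) x" using reach_sym[OF G h(1)] .
        ultimately have "reach E (?l + 9) a b" using reach_trans True by blast
        thus ?thesis using L by (simp add: add.commute)
      next
        case False
        hence "b \<in> set ys" using Cons.prems by auto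
        hence "reach E ?l a b" using Cons.IH h aY by auto
        thus ?thesis using L reach_mono by (metis le_add2)
      qed
    qed
  qed
qed

lemma comp_basic:
  assumes G: "simple_graph V E" and C: "C \<in> components E U"
  shows "C \<subseteq> U \<and> C \<noteq> {} \<and> (\<forall>x\<in>C. \<forall>y\<in>C. (\<lambda>x y. E x y \<and> x \<in> U \<and> y \<in> U)\<^sup>*\<^sup>* x y)"
proof -
  define R where "R = (\<lambda>x y. E x y \<and> x \<in> U \<and> y \<in> U)"
  obtain u where u: "u \<in> U" "C = {w. R\<^sup>*\<^sup>* u w}" using C unfolding components_def R_def by auto
  have inU: "R\<^sup>*\<^sup>* u w \<Longrightarrow> w \<in> U" for w
  proof (induction rule: rtranclp_induct)
    case base show ?case by (rule u(1))
  next
    case (step y z) thus ?case unfolding R_def by blast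
  qed
  have sy: "symp R" unfolding symp_def R_def using sg_sym[OF G] by blast
  have sy2: "R\<^sup>*\<^sup>* y x" if "R\<^sup>*\<^sup>* x y" for x y
    using sympD[OF symp_rtranclp[OF sy] that] .
  have "\<forall>x\<in>C. \<forall>y\<in>C. R\<^sup>*\<^sup>* x y"
  proof (intro ballI)
    fix x y assume "x \<in> C" "y \<in> C"
    hence a: "R\<^sup>*\<^sup>* u x" "R\<^sup>*\<^sup>* u y" using u by auto
    show "R\<^sup>*\<^sup>* x y" using rtranclp_trans[OF sy2[OF a(1)] a(2)] .
  qed
  moreover have "u \<in> C" using u by auto
  moreover have "C \<subseteq> U" using u inU by blast
  ultimately show ?thesis unfolding R_def by blast
qed

lemma comp_struct:
  assumes G: "simple_graph V E" and UV: "U \<subseteq> V" and C: "C \<in> components E U"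
  shows "\<exists>S. S \<subseteq> C \<and> sep E S \<and> S \<noteq> {} \<and> (\<forall>c\<in>C. \<exists>s\<in>S. reach E 4 c s) \<and>
     (\<forall>x\<in>S. \<forall>y\<in>S. (\<lambda>a b. reach E 9 a b \<and> a \<in> S \<and> b \<in> S)\<^sup>*\<^sup>* x y)"
proof -
  define R where "R = (\<lambda>x y. E x y \<and> x \<in> U \<and> y \<in> U)"
  have CB: "C \<subseteq> U" "C \<noteq> {}" "\<forall>x\<in>C. \<forall>y\<in>C. R\<^sup>*\<^sup>* x y" using comp_basic[OF G C] unfolding R_def by auto
  have fC: "finite C" using CB(1) UV G unfolding simple_graph_def by (auto intro: finite_subset)
  let ?F = "{S. S \<subseteq> C \<and> sep E S}"
  have fF: "finite ?F" by (rule finite_subset[of _ "Pow C"]) (use fC in auto)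
  have "{} \<in> ?F" unfolding sep_def by simp
  hence ne: "card ` ?F \<noteq> {}" by blast
  obtain S where S: "S \<in> ?F" "card S = Max (card ` ?F)"
    using Max_in[OF finite_imageI[OF fF] ne] by (metis (no_types, lifting) imageE)
  have maxS: "card S' \<le> card S" if "S' \<in> ?F" for S'
    using S(2) Max_ge[OF finite_imageI[OF fF]] that by (metis (no_types, lifting) imageI)
  have fS: "finite S" using S(1) fC finite_subset by blast
  have dom: "\<forall>c\<in>C. \<exists>s\<in>S. reach E 4 c s"
  proof (rule ccontr)
    assume "\<not> (\<forall>c\<in>C. \<exists>s\<in>S. reach E 4 c s)"
    then obtain c where c: "c \<in> C" "\<forall>s\<in>S. \<not> reach E 4 c s" by auto
    have cS: "c \<notin> S" using c reach_refl by blast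
    have "sep E (insert c S)" unfolding sep_def
    proof (intro ballI impI)
      fix s t assume st: "s \<in> insert c S" "t \<in> insert c S" "s \<noteq> t"
      show "\<not> reach E 4 s t"
      proof (cases "s = c")
        case True thus ?thesis using st c by auto
      next
        case False
        hence sS: "s \<in> S" using st by auto
        show ?thesis
        proof (cases "t = c")
          case True thus ?thesis using sS c reach_sym[OF G, of 4 s c] by auto
        next
          case False thus ?thesis using sS st S(1) unfolding sep_def by auto
        qed
      qed
    qed
    hence "insert c S \<in> ?F" using S(1) c(1) by auto
    from maxS[OF this] show False using cS fS by simp
  qed
  define rep where "rep c = (SOME s. s \<in> S \<and> reach E 4 c s)" for c
  have rep: "rep c \<in> S \<and> reach E 4 c (rep c)" if "c \<in> C" for c
  proof -
    have "\<exists>s. s \<in> S \<and> reach E 4 c s" using dom that by blast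
    thus ?thesis unfolding rep_def by (rule someI_ex)
  qed
  have repS: "rep s = s" if "s \<in> S" for s
  proof -
    have "s \<in> C" using S that by auto
    from rep[OF this] have r: "rep s \<in> S" "reach E 4 s (rep s)" by auto
    have sS: "sep E S" using S(1) by simp
    show ?thesis
    proof (rule ccontr)
      assume "rep s \<noteq> s"
      hence "\<not> reach E 4 s (rep s)" using sS that r(1) unfolding sep_def by metis
      thus False using r(2) by simp
    qed
  qed
  define RS where "RS = (\<lambda>a b. reach E 9 a b \<and> a \<in> S \<and> b \<in> S)"
  have path: "R\<^sup>*\<^sup>* c c' \<Longrightarrow> c \<in> C \<Longrightarrow> RS\<^sup>*\<^sup>* (rep c) (rep c')" for c c'
  proof (induction rule: rtranclp_induct)
    case base thus ?case by simp
  next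
    case (step y z)
    have yC: "y \<in> C"
    proof -
      obtain u where u: "C = {w. R\<^sup>*\<^sup>* u w}" using C unfolding components_def R_def by auto
      hence "R\<^sup>*\<^sup>* u c" using step.prems by auto
      hence "R\<^sup>*\<^sup>* u y" using step.hyps(1) by (rule rtranclp_trans)
      thus ?thesis using u by simp
    qed
    have zC: "z \<in> C"
    proof -
      obtain u where u: "C = {w. R\<^sup>*\<^sup>* u w}" using C unfolding components_def R_def by auto
      hence "R\<^sup>*\<^sup>* u y" using yC by auto
      hence "R\<^sup>*\<^sup>* u z" using step.hyps(2) by (rule rtranclp.rtrancl_into_rtrancl)
      thus ?thesis using u by simp
    qed
    have "reach E 4 (rep y) y" using reach_sym[OF G] rep[OF yC] by auto
    moreover have "E y z" using step.hyps(2) unfolding R_def by simp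
    hence "reach E 1 y z" by (rule reach_E) simp
    ultimately have "reach E (4+1) (rep y) z" using reach_trans by blast
    moreover have "reach E 4 z (rep z)" using rep[OF zC] by auto
    ultimately have "reach E (4+1+4) (rep y) (rep z)" using reach_trans by blast
    hence "RS (rep y) (rep z)" using rep[OF yC] rep[OF zC] unfolding RS_def by simp
    thus ?case using step by (meson rtranclp.rtrancl_into_rtrancl)
  qed
  have conn: "\<forall>x\<in>S. \<forall>y\<in>S. RS\<^sup>*\<^sup>* x y"
  proof (intro ballI)
    fix x y assume "x \<in> S" "y \<in> S"
    hence "x \<in> C" "y \<in> C" using S(1) by auto
    hence "RS\<^sup>*\<^sup>* (rep x) (rep y)" using path CB(3) by auto
    thus "RS\<^sup>*\<^sup>* x y" using repS \<open>x\<in>S\<close> \<open>y\<in>S\<close> by simp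
  qed
  have "S \<noteq> {}" using dom CB(2) by auto
  thus ?thesis using S dom conn unfolding RS_def by auto
qed

lemma U_sub: "U_set V E \<sigma> \<kappa> \<subseteq> V"
  unfolding U_set_def active_def Let_def by auto

lemma U_good: "S \<subseteq> U_set V E \<sigma> \<kappa> \<Longrightarrow> good V E \<sigma> \<kappa> S"
  unfolding U_set_def good_def Let_def by auto

lemma union_bound:
  assumes G: "simple_graph V E" and D: "max_degree V E \<ge> 1"
    and p: "p = 1 / (real (max_degree V E) + 1)" and m: "m \<ge> 1"
    and hyp: "\<And>\<sigma>. \<not> Ok \<sigma> \<Longrightarrow> \<exists>S. S \<subseteq> U_set V E \<sigma> \<kappa> \<and> sep E S \<and> m \<le> card S \<and> finite S \<and>
        (\<forall>x\<in>S. \<forall>y\<in>S. (\<lambda>a b. reach E 9 a b \<and> a \<in> S \<and> b \<in> S)\<^sup>*\<^sup>* x y)"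
  shows "measure_pmf.prob (coins V \<kappa> p) {\<sigma>. Ok \<sigma>}
     \<ge> 1 - real (card V) * real (max_degree V E + 1) ^ (9 * (2 * m - 2)) * (31/32) ^ (\<kappa> * m)"
proof -
  let ?M = "coins V \<kappa> p"
  define Fam where "Fam = {xs \<in> walks V E (2 * m - 2). sep E (set xs) \<and> card (set xs) = m}"
  have WC: "finite (walks V E (2 * m - 2))" "card (walks V E (2 * m - 2)) \<le> card V * (max_degree V E + 1) ^ (9 * (2 * m - 2))"
    using walks_card[OF G] by auto
  have fF: "finite Fam" using WC(1) unfolding Fam_def by auto
  have cF: "card Fam \<le> card V * (max_degree V E + 1) ^ (9 * (2 * m - 2))"
    using card_mono[OF WC(1), of Fam] WC(2) unfolding Fam_def by auto
  have sub: "{\<sigma>. \<not> Ok \<sigma>} \<subseteq> (\<Union>xs\<in>Fam. {\<sigma>. good V E \<sigma> \<kappa> (set xs)})"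
  proof
    fix \<sigma> assume "\<sigma> \<in> {\<sigma>. \<not> Ok \<sigma>}"
    then obtain S where S: "S \<subseteq> U_set V E \<sigma> \<kappa>" "sep E S" "m \<le> card S" "finite S"
        "\<forall>x\<in>S. \<forall>y\<in>S. (\<lambda>a b. reach E 9 a b \<and> a \<in> S \<and> b \<in> S)\<^sup>*\<^sup>* x y"
      using hyp by blast
    obtain xs where xs: "length xs = 2 * m - 1" "set xs \<subseteq> S" "card (set xs) = m" "successively (reach E 9) xs"
      using grow[OF G S(4) S(5) m S(3)] by blast
    have "xs \<in> walks V E (2 * m - 2)"
      unfolding walks_def using xs S(1) U_sub[of V E \<sigma> \<kappa>] m by auto
    moreover have "sep E (set xs)" using S(2) xs(2) unfolding sep_def by blast
    ultimately have "xs \<in> Fam" using xs(3) unfolding Fam_def by auto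
    moreover have "good V E \<sigma> \<kappa> (set xs)" using U_good S(1) xs(2) by blast
    ultimately show "\<sigma> \<in> (\<Union>xs\<in>Fam. {\<sigma>. good V E \<sigma> \<kappa> (set xs)})" by blast
  qed
  have "measure_pmf.prob ?M {\<sigma>. \<not> Ok \<sigma>} \<le> measure_pmf.prob ?M (\<Union>xs\<in>Fam. {\<sigma>. good V E \<sigma> \<kappa> (set xs)})"
    by (rule measure_pmf.finite_measure_mono[OF sub]) simp
  also have "\<dots> \<le> (\<Sum>xs\<in>Fam. measure_pmf.prob ?M {\<sigma>. good V E \<sigma> \<kappa> (set xs)})"
    by (rule measure_pmf.finite_measure_subadditive_finite[OF fF]) auto
  also have "\<dots> \<le> (\<Sum>xs\<in>Fam. (31/32) ^ (\<kappa> * m))"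
  proof (rule sum_mono)
    fix xs assume "xs \<in> Fam"
    hence xs: "set xs \<subseteq> V" "sep E (set xs)" "card (set xs) = m" unfolding Fam_def walks_def by auto
    show "measure_pmf.prob ?M {\<sigma>. good V E \<sigma> \<kappa> (set xs)} \<le> (31/32) ^ (\<kappa> * m)"
      using stage_bound[OF G D p _ xs(1), of \<kappa>] xs(2,3) unfolding sep_def by auto
  qed
  also have "\<dots> = real (card Fam) * (31/32) ^ (\<kappa> * m)" by simp
  also have "\<dots> \<le> real (card V * (max_degree V E + 1) ^ (9 * (2 * m - 2))) * (31/32) ^ (\<kappa> * m)"
  proof (intro mult_right_mono)
    show "real (card Fam) \<le> real (card V * (max_degree V E + 1) ^ (9 * (2 * m - 2)))"
      using cF by (simp only: of_nat_le_iff)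
  qed simp
  finally have b: "measure_pmf.prob ?M {\<sigma>. \<not> Ok \<sigma>} \<le> real (card V) * real (max_degree V E + 1) ^ (9 * (2 * m - 2)) * (31/32) ^ (\<kappa> * m)"
    by simp
  have "measure_pmf.prob ?M {\<sigma>. Ok \<sigma>} = 1 - measure_pmf.prob ?M {\<sigma>. \<not> Ok \<sigma>}"
    using measure_pmf.prob_compl[of "{\<sigma>. \<not> Ok \<sigma>}" ?M] by (simp add: Compl_eq_Diff_UNIV[symmetric] Collect_neg_eq[symmetric])
  thus ?thesis using b by simp
qed

lemma pow3132: "(31/32::real) ^ j \<le> 2 powr (-(real j / 22))"
proof -
  let ?x = "2 powr (-(real j / 22)) :: real"
  have "?x ^ Suc 21 = 2 powr (real (Suc 21) * (-(real j / 22)))" by (rule powr_power) simp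
  also have "\<dots> = 2 powr (- real j)" by simp
  also have "\<dots> = (1/2) ^ j" by (simp add: powr_minus_divide powr_realpow power_one_over)
  finally have x: "?x ^ Suc 21 = (1/2) ^ j" .
  have "((31/32::real) ^ j) ^ Suc 21 = ((31/32) ^ Suc 21) ^ j" by (simp only: power_mult[symmetric] mult.commute)
  also have "\<dots> \<le> (1/2) ^ j" by (intro power_mono) (simp_all add: power_divide)
  finally have "((31/32::real) ^ j) ^ Suc 21 \<le> ?x ^ Suc 21" using x by simp
  thus ?thesis by (rule power_le_imp_le_base) simp
qed

lemma K:
  fixes c c6 a L :: real and m n \<kappa> \<Delta> :: nat
  assumes c: "c > 0" and c6: "c6 = 22 * (36 + 16 * (c + 1))" and a: "a \<ge> 0"
    and Dl: "real (\<Delta> + 1) \<le> 2 powr (2 * a)" and k: "real \<kappa> \<ge> c6 * a"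
    and am: "a * real m \<ge> L / 16" and L: "L = log 2 (real n)" and n: "n \<ge> 1"
  shows "real n * real (\<Delta> + 1) ^ (9 * (2 * m - 2)) * (31/32) ^ (\<kappa> * m) \<le> 1 / real n powr c"
proof -
  have h1: "real (\<Delta> + 1) ^ (9 * (2 * m - 2)) \<le> 2 powr (36 * a * real m)"
  proof -
    have "real (\<Delta> + 1) ^ (9 * (2 * m - 2)) \<le> real (\<Delta> + 1) ^ (18 * m)"
      by (intro power_increasing) auto
    also have "\<dots> \<le> (2 powr (2 * a)) ^ (18 * m)" using Dl by (intro power_mono) auto
    also have "\<dots> = 2 powr (real (18 * m) * (2 * a))" by (rule powr_power) simp
    also have "\<dots> = 2 powr (36 * a * real m)" by (simp add: algebra_simps)
    finally show ?thesis .
  qed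
  have h2: "(31/32::real) ^ (\<kappa> * m) \<le> 2 powr (-(c6 * a * real m / 22))"
  proof -
    have "(31/32::real) ^ (\<kappa> * m) \<le> 2 powr (-(real (\<kappa> * m) / 22))" by (rule pow3132)
    also have "\<dots> \<le> 2 powr (-(c6 * a * real m / 22))"
    proof (rule powr_mono)
      have "c6 * a * real m \<le> real \<kappa> * real m" using k by (intro mult_right_mono) auto
      thus "- (real (\<kappa> * m) / 22) \<le> - (c6 * a * real m / 22)" by simp
    qed simp
    finally show ?thesis .
  qed
  have "real n * real (\<Delta> + 1) ^ (9 * (2 * m - 2)) * (31/32) ^ (\<kappa> * m)
      \<le> real n * (2 powr (36 * a * real m) * 2 powr (-(c6 * a * real m / 22)))"
    using h1 h2 by (simp add: mult.assoc mult_mono)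
  also have "2 powr (36 * a * real m) * 2 powr (-(c6 * a * real m / 22)) = 2 powr (-(16 * (c + 1) * (a * real m)))"
    unfolding powr_add[symmetric] c6 by (rule arg_cong[where f="\<lambda>x. 2 powr x"]) (simp add: field_simps)
  also have "\<dots> \<le> 2 powr (-(c + 1) * L)"
  proof (rule powr_mono)
    have "(c + 1) * L \<le> (c + 1) * (16 * (a * real m))" using am c by (intro mult_left_mono) auto
    thus "- (16 * (c + 1) * (a * real m)) \<le> - (c + 1) * L" by (simp add: algebra_simps)
  qed simp
  also have "2 powr (-(c + 1) * L) = real n powr (-(c + 1))"
  proof -
    have "2 powr (-(c + 1) * L) = (2 powr L) powr (-(c + 1))" by (simp add: powr_powr mult.commute)
    also have "2 powr L = real n" using n unfolding L by simp
    finally show ?thesis .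
  qed
  finally have "real n * real (\<Delta> + 1) ^ (9 * (2 * m - 2)) * (31/32) ^ (\<kappa> * m) \<le> real n * real n powr (-(c + 1))"
    using n by simp
  also have "real n * real n powr (-(c + 1)) = real n powr (-c)"
  proof -
    have "real n powr (-c) = real n powr (1 + (-(c+1)))" by simp
    also have "\<dots> = real n powr 1 * real n powr (-(c+1))" by (rule powr_add)
    also have "\<dots> = real n * real n powr (-(c+1))" using n by simp
    finally show ?thesis by simp
  qed
  also have "\<dots> = 1 / real n powr c" by (simp add: powr_minus_divide)
  finally show ?thesis .
qed

lemma deg1_comp:
  assumes G: "simple_graph V E" and D: "max_degree V E \<le> 1" and UV: "U \<subseteq> V"
    and C: "C \<in> components E U"
  shows "card C \<le> 2"
proof -
  define R where "R = (\<lambda>x y. E x y \<and> x \<in> U \<and> y \<in> U)"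
  obtain u where u: "u \<in> U" "C = {w. R\<^sup>*\<^sup>* u w}" using C unfolding components_def R_def by auto
  have uV: "u \<in> V" using u UV by auto
  have fV: "finite V" using G unfolding simple_graph_def by auto
  have key: "R\<^sup>*\<^sup>* u w \<Longrightarrow> w = u \<or> E u w" for w
  proof (induction rule: rtranclp_induct)
    case base thus ?case by simp
  next
    case (step y z)
    have Eyz: "E y z" using step.hyps(2) unfolding R_def by simp
    show ?case
    proof (cases "y = u")
      case True thus ?thesis using Eyz by simp
    next
      case False
      hence "E u y" using step.IH by simp
      hence Eyu: "E y u" using sg_sym[OF G] by blast
      have yV: "y \<in> V" using Eyz sg_V[OF G] by blast
      have "card {x\<in>V. E y x} \<le> Suc 0" using degree_le[OF G yV] D unfolding degree_def by simp
      moreover have "u \<in> {x\<in>V. E y x}" "z \<in> {x\<in>V. E y x}" using Eyu Eyz sg_V[OF G] by blast+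
      ultimately have "z = u" using fV card_le_Suc0_iff_eq[of "{x\<in>V. E y x}"] by auto
      thus ?thesis by simp
    qed
  qed
  have "C \<subseteq> insert u {x\<in>V. E u x}" using key u sg_V[OF G] by blast
  hence "card C \<le> card (insert u {x\<in>V. E u x})" using fV by (intro card_mono) auto
  also have "\<dots> \<le> Suc (card {x\<in>V. E u x})" by (rule card_insert_le_m1[THEN le_trans]) (auto simp: card_insert_if)
  also have "\<dots> \<le> 2" using degree_le[OF G uV] D unfolding degree_def by simp
  finally show ?thesis .
qed

lemma comp_finite: "simple_graph V E \<Longrightarrow> U \<subseteq> V \<Longrightarrow> C \<in> components E U \<Longrightarrow> finite C"
  using comp_basic[of V E C U] unfolding simple_graph_def by (meson finite_subset)

lemma nat_ceil_ge: "real (nat \<lceil>x\<rceil>) \<ge> x"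
  by linarith

lemma nat_ceil_le: "x \<le> real k \<Longrightarrow> nat \<lceil>x\<rceil> \<le> k"
  by (simp add: nat_le_iff ceiling_le_iff)

theorem lemma5:
  fixes c :: real
  assumes "c > 0"
  shows "\<exists>c6 > 0. \<exists>N::nat. \<forall>(V::nat set) E.
     simple_graph V E \<and> card V \<ge> N \<and> max_degree V E \<ge> 1 \<and>
     real (max_degree V E) \<le> 2 powr sqrt (log 2 (card V)) \<longrightarrow>
     (let n = card V; \<Delta> = max_degree V E; p = 1 / (real \<Delta> + 1);
          \<kappa>1 = nat \<lceil>c6 * sqrt (log 2 n)\<rceil>; \<kappa>2 = nat \<lceil>c6 * log 2 \<Delta>\<rceil>
      in measure_pmf.prob (coins V \<kappa>1 p)
           {\<sigma>. \<forall>C \<in> components E (U_set V E \<sigma> \<kappa>1).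
                  real (weak_diam E C) < 5 * sqrt (log 2 n)} \<ge> 1 - 1 / real n powr c
       \<and> measure_pmf.prob (coins V \<kappa>2 p)
           {\<sigma>. \<forall>C \<in> components E (U_set V E \<sigma> \<kappa>2).
                  real (card C) < real \<Delta> ^ 4 * log 2 n} \<ge> 1 - 1 / real n powr c)"
proof -
  define c6 where "c6 = 22 * (36 + 16 * (c + 1))"
  have c6pos: "c6 > 0" unfolding c6_def using assms by simp
  show ?thesis
  proof (intro exI[of _ c6] conjI c6pos exI[of _ "32::nat"] allI impI)
    fix V :: "nat set" and E
    assume H: "simple_graph V E \<and> card V \<ge> 32 \<and> max_degree V E \<ge> 1 \<and>
      real (max_degree V E) \<le> 2 powr sqrt (log 2 (card V))"
    have G: "simple_graph V E" and n32: "card V \<ge> 32" and D: "max_degree V E \<ge> 1"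
      and Db: "real (max_degree V E) \<le> 2 powr sqrt (log 2 (card V))" using H by auto
    define n where "n = card V"
    define \<Delta> where "\<Delta> = max_degree V E"
    define p where "p = 1 / (real \<Delta> + 1)"
    define L where "L = log 2 (real n)"
    define s where "s = sqrt L"
    define \<kappa>1 where "\<kappa>1 = nat \<lceil>c6 * s\<rceil>"
    define \<kappa>2 where "\<kappa>2 = nat \<lceil>c6 * log 2 \<Delta>\<rceil>"
    have n1: "n \<ge> 1" using n32 unfolding n_def by simp
    have L5: "L \<ge> 5"
    proof -
      have "log 2 32 \<le> log 2 (real n)" using n32 unfolding n_def by (subst log_le_cancel_iff) auto
      moreover have "log 2 (32::real) = 5"
      proof -
        have "(2::real) powr 5 = 32" by (simp add: powr_numeral)
        hence "log 2 (32::real) = log 2 (2 powr 5)" by simp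
        also have "\<dots> = 5" by (rule log_powr_cancel) auto
        finally show ?thesis .
      qed
      ultimately show ?thesis unfolding L_def by simp
    qed
    have s1: "s \<ge> 1" unfolding s_def using L5 by simp
    have ss: "s * s = L" unfolding s_def using L5 by simp
    have pD: "p = 1 / (real (max_degree V E) + 1)" unfolding p_def \<Delta>_def ..
    have UV: "U_set V E \<sigma> k \<subseteq> V" for \<sigma> k by (rule U_sub)
    have P1: "measure_pmf.prob (coins V \<kappa>1 p)
           {\<sigma>. \<forall>C \<in> components E (U_set V E \<sigma> \<kappa>1). real (weak_diam E C) < 5 * s} \<ge> 1 - 1 / real n powr c"
    proof -
      define m where "m = nat \<lceil>s / 4\<rceil>"
      have "1 \<le> \<lceil>s / 4\<rceil>" using s1 by simp
      hence m1: "m \<ge> 1" unfolding m_def by linarith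
      have hyp: "\<exists>S. S \<subseteq> U_set V E \<sigma> \<kappa>1 \<and> sep E S \<and> m \<le> card S \<and> finite S \<and>
        (\<forall>x\<in>S. \<forall>y\<in>S. (\<lambda>a b. reach E 9 a b \<and> a \<in> S \<and> b \<in> S)\<^sup>*\<^sup>* x y)"
        if nOk: "\<not> (\<forall>C \<in> components E (U_set V E \<sigma> \<kappa>1). real (weak_diam E C) < 5 * s)" for \<sigma>
      proof -
        let ?U = "U_set V E \<sigma> \<kappa>1"
        obtain C where C: "C \<in> components E ?U" "real (weak_diam E C) \<ge> 5 * s" using nOk by force
        have CB: "C \<subseteq> ?U" "C \<noteq> {}" using comp_basic[OF G C(1)] by auto
        have fC: "finite C" using comp_finite[OF G UV C(1)] .
        obtain S where S: "S \<subseteq> C" "sep E S" "S \<noteq> {}" "\<forall>c\<in>C. \<exists>s\<in>S. reach E 4 c s"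
          "\<forall>x\<in>S. \<forall>y\<in>S. (\<lambda>a b. reach E 9 a b \<and> a \<in> S \<and> b \<in> S)\<^sup>*\<^sup>* x y"
          using comp_struct[OF G UV C(1)] by blast
        have fS: "finite S" using S(1) fC finite_subset by blast
        define k where "k = card S"
        have k1: "k \<ge> 1" using fS S(3) unfolding k_def by (simp add: Suc_le_eq card_gt_0_iff)
        obtain xs where xs: "length xs = 2 * k - 1" "set xs \<subseteq> S" "card (set xs) = k" "successively (reach E 9) xs"
          using grow[OF G fS S(5) k1] unfolding k_def by auto
        have setxs: "set xs = S" using card_subset_eq[OF fS xs(2)] xs(3) unfolding k_def by simp
        have wd: "reach E (9 * (2 * k - 2)) a b" if "a \<in> S" "b \<in> S" for a b
        proof -
          have "length xs - 1 = 2 * k - 2" using xs(1) by simp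
          thus ?thesis using walk_dist[OF G xs(4), of a b] that setxs by simp
        qed
        let ?Ds = "{gdist E u v | u v. u \<in> C \<and> v \<in> C}"
        have Ds: "?Ds = (\<lambda>(u,v). gdist E u v) ` (C \<times> C)" by auto
        have fDs: "finite ?Ds" unfolding Ds using fC by auto
        have neDs: "?Ds \<noteq> {}" using CB(2) by auto
        obtain u v where uv: "u \<in> C" "v \<in> C" "weak_diam E C = gdist E u v"
          using Max_in[OF fDs neDs] unfolding weak_diam_def by auto
        obtain su where su: "su \<in> S" "reach E 4 u su" using S(4) uv(1) by blast
        obtain sv where sv: "sv \<in> S" "reach E 4 v sv" using S(4) uv(2) by blast
        have "reach E (4 + 9 * (2 * k - 2)) u sv" using reach_trans[OF su(2) wd[OF su(1) sv(1)]] .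
        hence "reach E (4 + 9 * (2 * k - 2) + 4) u v" using reach_trans reach_sym[OF G sv(2)] by blast
        then obtain j where j: "j \<le> 4 + 9 * (2 * k - 2) + 4" "(E ^^ j) u v" unfolding reach_def by auto
        have "gdist E u v \<le> j" unfolding gdist_def using j(2) by (rule Least_le)
        hence "weak_diam E C \<le> 4 + 9 * (2 * k - 2) + 4" using j(1) uv(3) by simp
        hence "real (weak_diam E C) \<le> 8 + 18 * real k - 18" using k1 by linarith
        hence "5 * s \<le> 18 * real k - 10" using C(2) by linarith
        hence "s / 4 \<le> real k" using s1 by linarith
        hence "m \<le> card S" unfolding m_def k_def by (rule nat_ceil_le)
        thus ?thesis using S CB(1) fS by blast
      qed
      let ?Ok = "\<lambda>\<sigma>. \<forall>C \<in> components E (U_set V E \<sigma> \<kappa>1). real (weak_diam E C) < 5 * s"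
      have ub: "measure_pmf.prob (coins V \<kappa>1 p) {\<sigma>. ?Ok \<sigma>}
          \<ge> 1 - real (card V) * real (max_degree V E + 1) ^ (9 * (2 * m - 2)) * (31/32) ^ (\<kappa>1 * m)"
        by (rule union_bound[OF G D pD m1, where Ok = ?Ok]) (rule hyp)
      have Kb: "real n * real (\<Delta> + 1) ^ (9 * (2 * m - 2)) * (31/32) ^ (\<kappa>1 * m) \<le> 1 / real n powr c"
      proof (rule K[OF assms c6_def])
        show "0 \<le> s" using s1 by simp
        have "real \<Delta> \<le> 2 powr s" using Db unfolding \<Delta>_def s_def L_def n_def .
        hence "real (\<Delta> + 1) \<le> 2 * 2 powr s" using D unfolding \<Delta>_def by simp
        also have "\<dots> = 2 powr (1 + s)" by (simp add: powr_add)
        also have "\<dots> \<le> 2 powr (2 * s)" using s1 by (intro powr_mono) auto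
        finally show "real (\<Delta> + 1) \<le> 2 powr (2 * s)" .
        show "c6 * s \<le> real \<kappa>1" unfolding \<kappa>1_def by (rule nat_ceil_ge)
        have "real m \<ge> s / 4" unfolding m_def by (rule nat_ceil_ge)
        hence "s * real m \<ge> s * (s / 4)" using s1 by (intro mult_left_mono) auto
        thus "s * real m \<ge> L / 16" using ss L5 by simp
        show "L = log 2 (real n)" unfolding L_def ..
        show "n \<ge> 1" by (rule n1)
      qed
      show ?thesis using ub Kb unfolding n_def \<Delta>_def by simp
    qed
    have P2: "measure_pmf.prob (coins V \<kappa>2 p)
           {\<sigma>. \<forall>C \<in> components E (U_set V E \<sigma> \<kappa>2). real (card C) < real \<Delta> ^ 4 * L} \<ge> 1 - 1 / real n powr c"
    proof (cases "\<Delta> = 1")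
      case True
      have "{\<sigma>. \<forall>C \<in> components E (U_set V E \<sigma> \<kappa>2). real (card C) < real \<Delta> ^ 4 * L} = UNIV"
      proof (intro set_eqI iffI)
        fix \<sigma>
        show "\<sigma> \<in> {\<sigma>. \<forall>C \<in> components E (U_set V E \<sigma> \<kappa>2). real (card C) < real \<Delta> ^ 4 * L}"
        proof (intro CollectI ballI)
          fix C assume C: "C \<in> components E (U_set V E \<sigma> \<kappa>2)"
          have "card C \<le> 2" using deg1_comp[OF G _ UV C] True unfolding \<Delta>_def by simp
          thus "real (card C) < real \<Delta> ^ 4 * L" using True L5 by simp
        qed
      qed auto
      moreover have "1 / real n powr c \<ge> 0" by simp
      ultimately show ?thesis by simp
    next
      case False
      hence D2: "\<Delta> \<ge> 2" using D unfolding \<Delta>_def by simp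
      define a where "a = log 2 (real \<Delta>)"
      have a1: "a \<ge> 1" unfolding a_def using D2 by simp
      define m where "m = nat \<lceil>L / 16\<rceil>"
      have "1 \<le> \<lceil>L / 16\<rceil>" using L5 by simp
      hence m1: "m \<ge> 1" unfolding m_def by linarith
      have hyp: "\<exists>S. S \<subseteq> U_set V E \<sigma> \<kappa>2 \<and> sep E S \<and> m \<le> card S \<and> finite S \<and>
        (\<forall>x\<in>S. \<forall>y\<in>S. (\<lambda>a b. reach E 9 a b \<and> a \<in> S \<and> b \<in> S)\<^sup>*\<^sup>* x y)"
        if nOk: "\<not> (\<forall>C \<in> components E (U_set V E \<sigma> \<kappa>2). real (card C) < real \<Delta> ^ 4 * L)" for \<sigma>
      proof -
        let ?U = "U_set V E \<sigma> \<kappa>2"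
        obtain C where C: "C \<in> components E ?U" "real (card C) \<ge> real \<Delta> ^ 4 * L" using nOk by force
        have CB: "C \<subseteq> ?U" "C \<noteq> {}" using comp_basic[OF G C(1)] by auto
        have fC: "finite C" using comp_finite[OF G UV C(1)] .
        obtain S where S: "S \<subseteq> C" "sep E S" "S \<noteq> {}" "\<forall>c\<in>C. \<exists>s\<in>S. reach E 4 c s"
          "\<forall>x\<in>S. \<forall>y\<in>S. (\<lambda>a b. reach E 9 a b \<and> a \<in> S \<and> b \<in> S)\<^sup>*\<^sup>* x y"
          using comp_struct[OF G UV C(1)] by blast
        have fS: "finite S" using S(1) fC finite_subset by blast
        have SV: "S \<subseteq> V" using S(1) CB(1) UV by blast
        have Csub: "C \<subseteq> (\<Union>t\<in>S. {y. reach E 4 t y})"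
        proof
          fix x assume "x \<in> C"
          then obtain t where "t \<in> S" "reach E 4 x t" using S(4) by blast
          thus "x \<in> (\<Union>t\<in>S. {y. reach E 4 t y})" using reach_sym[OF G] by blast
        qed
        have "card C \<le> card (\<Union>t\<in>S. {y. reach E 4 t y})"
          by (rule card_mono[OF _ Csub]) (use fS ball_card[OF G] SV in blast)
        also have "\<dots> \<le> (\<Sum>t\<in>S. card {y. reach E 4 t y})" by (rule card_UN_le[OF fS])
        also have "\<dots> \<le> (\<Sum>t\<in>S. (\<Delta> + 1) ^ 4)"
          by (rule sum_mono) (use ball_card[OF G] SV in \<open>auto simp: \<Delta>_def\<close>)
        also have "\<dots> = card S * (\<Delta> + 1) ^ 4" by simp
        finally have "real (card C) \<le> real (card S) * real (\<Delta> + 1) ^ 4"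
          by (metis of_nat_le_iff of_nat_mult of_nat_power)
        also have "\<dots> \<le> real (card S) * (16 * real \<Delta> ^ 4)"
        proof (intro mult_left_mono)
          have "real (\<Delta> + 1) ^ 4 \<le> (2 * real \<Delta>) ^ 4" using D2 by (intro power_mono) auto
          thus "real (\<Delta> + 1) ^ 4 \<le> 16 * real \<Delta> ^ 4" by (simp add: power_mult_distrib)
        qed simp
        finally have "real \<Delta> ^ 4 * L \<le> real (card S) * (16 * real \<Delta> ^ 4)" using C(2) by linarith
        moreover have "real \<Delta> ^ 4 > 0" using D2 by simp
        ultimately have "L / 16 \<le> real (card S)" by (simp add: field_simps)
        hence "m \<le> card S" unfolding m_def by (rule nat_ceil_le)
        thus ?thesis using S CB(1) fS by blast
      qed
      let ?Ok = "\<lambda>\<sigma>. \<forall>C \<in> components E (U_set V E \<sigma> \<kappa>2). real (card C) < real \<Delta> ^ 4 * L"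
      have ub: "measure_pmf.prob (coins V \<kappa>2 p) {\<sigma>. ?Ok \<sigma>}
          \<ge> 1 - real (card V) * real (max_degree V E + 1) ^ (9 * (2 * m - 2)) * (31/32) ^ (\<kappa>2 * m)"
        by (rule union_bound[OF G D pD m1, where Ok = ?Ok]) (rule hyp)
      have Kb: "real n * real (\<Delta> + 1) ^ (9 * (2 * m - 2)) * (31/32) ^ (\<kappa>2 * m) \<le> 1 / real n powr c"
      proof (rule K[OF assms c6_def])
        show "0 \<le> a" using a1 by simp
        have "(2 powr a) ^ 2 = (2::real) powr (real 2 * a)" by (rule powr_power) simp
        hence "2 powr (2 * a) = (2 powr a) ^ 2" by simp
        also have "2 powr a = real \<Delta>" unfolding a_def using D2 by simp
        finally have "2 powr (2 * a) = real \<Delta> ^ 2" .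
        moreover have "real (\<Delta> + 1) \<le> real \<Delta> ^ 2"
        proof -
          have "2 * \<Delta> \<le> \<Delta> * \<Delta>" using D2 mult_le_mono1 by blast
          hence "\<Delta> + 1 \<le> \<Delta> ^ 2" using D2 unfolding power2_eq_square by linarith
          hence "real (\<Delta> + 1) \<le> real (\<Delta> ^ 2)" by (simp only: of_nat_le_iff)
          thus ?thesis by simp
        qed
        ultimately show "real (\<Delta> + 1) \<le> 2 powr (2 * a)" by simp
        show "c6 * a \<le> real \<kappa>2" unfolding \<kappa>2_def a_def by (rule nat_ceil_ge)
        have "real m \<ge> L / 16" unfolding m_def by (rule nat_ceil_ge)
        moreover have "a * real m \<ge> 1 * real m" using a1 by (intro mult_right_mono) auto
        ultimately show "a * real m \<ge> L / 16" by simp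
        show "L = log 2 (real n)" unfolding L_def ..
        show "n \<ge> 1" by (rule n1)
      qed
      show ?thesis using ub Kb unfolding n_def \<Delta>_def by simp
    qed
    show "let n = card V; \<Delta> = max_degree V E; p = 1 / (real \<Delta> + 1);
          \<kappa>1 = nat \<lceil>c6 * sqrt (log 2 n)\<rceil>; \<kappa>2 = nat \<lceil>c6 * log 2 \<Delta>\<rceil>
      in measure_pmf.prob (coins V \<kappa>1 p)
           {\<sigma>. \<forall>C \<in> components E (U_set V E \<sigma> \<kappa>1).
                  real (weak_diam E C) < 5 * sqrt (log 2 n)} \<ge> 1 - 1 / real n powr c
       \<and> measure_pmf.prob (coins V \<kappa>2 p)
           {\<sigma>. \<forall>C \<in> components E (U_set V E \<sigma> \<kappa>2).
                  real (card C) < real \<Delta> ^ 4 * log 2 n} \<ge> 1 - 1 / real n powr c"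
      using P1 P2 unfolding Let_def n_def \<Delta>_def p_def \<kappa>1_def \<kappa>2_def s_def L_def by simp
  qed
qed

end
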